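(* Let $k,\ell$ be positive integers, $e=(1,\dots,1)^\top\in\mathbb R^k$, and $(\Omega,\mathcal F,\mathcal P)$ a probability space. Let $A(\omega)\in\mathbb R^{k\times k}$, $B(\omega)\in\mathbb R^{k\times\ell}$, $C(\omega)\in\mathbb R^{\ell\times k}$, $D(\omega)\in\mathbb R^{\ell\times\ell}$, $p(\omega)\in\mathbb R^k$, $q(\omega)\in\mathbb R^\ell$ depend measurably on $\omega\in\Omega$, and set $F(x,u,\omega)=\big(A(\omega)x+B(\omega)u+p(\omega),\ C(\omega)x+D(\omega)u+q(\omega)\big)$. Define $$\widetilde F_1(x,u,t,\omega)=A(\omega)(x+te)+B(\omega)u+p(\omega)\in\mathbb R^k,$$ $$\widetilde F_2(x,u,t,\omega)=\begin{pmatrix}[tC(\omega)+ue^\top A(\omega)](x+te)+ue^\top[B(\omega)u+p(\omega)]+t[D(\omega)u+q(\omega)]\\ t^2-\|u\|^2\end{pmatrix}\in\mathbb R^{\ell+1}.$$ Let $x\in\mathbb R^k$, $u\in\mathbb R^\ell$, $z=(x,u)$, and suppose $u\ne0$ and $C(\omega)x+D(\omega)u+q(\omega)\neq0$. Then $z$ is a solution of the stochastic linear complementarity problem on $L(k,\ell)$, i.e. almost surely in $\omega$, $$(x,u)\in L(k,\ell),\quad F(x,u,\omega)\in M(k,\ell),\quad \langle (x,u),F(x,u,\omega)\rangle=0,$$ if and only if there exists $t>0$ such that $\tilde z:=(x-te,u,t)\in\mathbb R^{k+\ell+1}$ is a solution of the stochastic mixed complementarity problem, i.e., writing $\tilde x=x-te$,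 almost surely in $\omega$, $$\widetilde F_2(\tilde x,u,t,\omega)=0,\quad \tilde x\ge0,\quad \widetilde F_1(\tilde x,u,t,\omega)\ge0,\quad \tilde x^\top\widetilde F_1(\tilde x,u,t,\omega)=0.$$
   Context: $\|\cdot\|$ is the Euclidean norm and $\langle\cdot,\cdot\rangle$ the standard inner product on $\mathbb R^k\times\mathbb R^\ell$. The extended second order cone is $L(k,\ell)=\{(x,u)\in\mathbb R^k\times\mathbb R^\ell: x\ge\|u\|e\}$ (componentwise inequality) and its dual is $M(k,\ell)=\{(x,u)\in\mathbb R^k\times\mathbb R^\ell: e^\top x\ge\|u\|,\ x\ge0\}$. *)

theory Defs
  imports "HOL-Analysis.Analysis" "HOL-Probability.Probability"
begin

definition extL :: "(real^'k) \<Rightarrow> (real^'l) \<Rightarrow> bool" where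
  "extL x u \<longleftrightarrow> (\<forall>i. x $ i \<ge> norm u)"

definition extM :: "(real^'k) \<Rightarrow> (real^'l) \<Rightarrow> bool" where
  "extM x u \<longleftrightarrow> vec 1 \<bullet> x \<ge> norm u \<and> (\<forall>i. x $ i \<ge> 0)"

definition F1 :: "real^'k^'k \<Rightarrow> real^'l^'k \<Rightarrow> real^'k \<Rightarrow> real^'k \<Rightarrow> real^'l \<Rightarrow> real^'k" where
  "F1 A B p x u = A *v x + B *v u + p"

definition F2 :: "real^'k^'l \<Rightarrow> real^'l^'l \<Rightarrow> real^'l \<Rightarrow> real^'k \<Rightarrow> real^'l \<Rightarrow> real^'l" where
  "F2 C D q x u = C *v x + D *v u + q"

definition Ft1 :: "real^'k^'k \<Rightarrow> real^'l^'k \<Rightarrow> real^'k \<Rightarrow> real^'k \<Rightarrow> real^'l \<Rightarrow> real \<Rightarrow> real^'k" where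
  "Ft1 A B p x u t = A *v (x + t *\<^sub>R vec 1) + B *v u + p"

text \<open>Ftilde_2(x,u,t) in R^(l+1), represented as a pair (first l components, last component):
  ([t C + u e^T A](x + t e) + u e^T [B u + p] + t [D u + q],  t^2 - norm u ^ 2).\<close>
definition Ft2 :: "real^'k^'k \<Rightarrow> real^'l^'k \<Rightarrow> real^'k^'l \<Rightarrow> real^'l^'l \<Rightarrow> real^'k \<Rightarrow> real^'l
    \<Rightarrow> real^'k \<Rightarrow> real^'l \<Rightarrow> real \<Rightarrow> (real^'l) \<times> real" where
  "Ft2 A B C D p q x u t =
     (t *\<^sub>R (C *v (x + t *\<^sub>R vec 1)) + (vec 1 \<bullet> (A *v (x + t *\<^sub>R vec 1))) *\<^sub>R u
       + (vec 1 \<bullet> (B *v u + p)) *\<^sub>R u + t *\<^sub>R (D *v u + q),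
      t\<^sup>2 - (norm u)\<^sup>2)"

end

theory Submission imports Defs begin

lemma sum_nn: fixes a :: "real^'k" assumes "\<forall>i. a$i \<ge> 0" shows "vec 1 \<bullet> a \<ge> 0"
  using assms by (simp add: inner_vec_def sum_nonneg)

lemma xa_ge: fixes a x :: "real^'k" assumes "\<forall>i. a$i \<ge> 0" "\<forall>i. x$i \<ge> c"
  shows "x \<bullet> a \<ge> c * (vec 1 \<bullet> a)"
proof -
  have "c * (vec 1 \<bullet> a) = (\<Sum>i\<in>UNIV. c * a$i)" by (simp add: inner_vec_def sum_distrib_left)
  also have "\<dots> \<le> (\<Sum>i\<in>UNIV. x$i * a$i)" by (rule sum_mono) (simp add: assms mult_right_mono)
  also have "\<dots> = x \<bullet> a" by (simp add: inner_vec_def)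
  finally show ?thesis .
qed

lemma xte: fixes a x :: "real^'k"
  shows "(x - t *\<^sub>R vec 1) \<bullet> a = x \<bullet> a - t * (vec 1 \<bullet> a)"
  by (simp add: inner_diff_left)

lemma core1: fixes x a :: "real^'k" and u b :: "real^'l"
  assumes u: "u \<noteq> 0"
    and P: "(\<forall>i. x$i \<ge> norm u) \<and> (vec 1 \<bullet> a \<ge> norm b \<and> (\<forall>i. a$i \<ge> 0)) \<and> x \<bullet> a + u \<bullet> b = 0"
  shows "norm u *\<^sub>R b + (vec 1 \<bullet> a) *\<^sub>R u = 0 \<and> (\<forall>i. (x - norm u *\<^sub>R vec 1)$i \<ge> 0)
     \<and> (x - norm u *\<^sub>R vec 1) \<bullet> a = 0"
proof -
  have nu: "norm u > 0" using u by simp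
  have h1: "x \<bullet> a \<ge> norm u * (vec 1 \<bullet> a)" using P xa_ge by blast
  have h2: "norm u * (vec 1 \<bullet> a) \<ge> norm u * norm b" using P nu by (simp add: mult_left_mono)
  have h3: "- (u \<bullet> b) \<le> norm u * norm b"
    by (rule abs_le_D2[OF Cauchy_Schwarz_ineq2])
  have e1: "x \<bullet> a = norm u * (vec 1 \<bullet> a)" using h1 h2 h3 P by linarith
  have "norm u * (vec 1 \<bullet> a) = norm u * norm b" using h1 h2 h3 P by linarith
  hence e2: "vec 1 \<bullet> a = norm b" using nu by simp
  have e3: "u \<bullet> (-b) = norm u * norm (-b)" using h1 h2 h3 P by simp
  hence "norm u *\<^sub>R (-b) = norm b *\<^sub>R u" using norm_cauchy_schwarz_eq[of u "-b"] by simp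
  hence hh: "- (norm u *\<^sub>R b) = norm b *\<^sub>R u" by simp
  have "norm b *\<^sub>R u + norm u *\<^sub>R b = 0" by (metis hh add.left_inverse)
  hence c: "norm u *\<^sub>R b + (vec 1 \<bullet> a) *\<^sub>R u = 0" using e2 by (simp add: algebra_simps)
  show ?thesis using c e1 P xte[of x "norm u" a] by simp
qed

lemma core2: fixes x a :: "real^'k" and u b :: "real^'l"
  assumes u: "u \<noteq> 0" and t: "t > 0"
    and Q: "t *\<^sub>R b + (vec 1 \<bullet> a) *\<^sub>R u = 0 \<and> t\<^sup>2 - (norm u)\<^sup>2 = 0 \<and> (\<forall>i. (x - t *\<^sub>R vec 1)$i \<ge> 0)
     \<and> (\<forall>i. a$i \<ge> 0) \<and> (x - t *\<^sub>R vec 1) \<bullet> a = 0"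
  shows "(\<forall>i. x$i \<ge> norm u) \<and> (vec 1 \<bullet> a \<ge> norm b \<and> (\<forall>i. a$i \<ge> 0)) \<and> x \<bullet> a + u \<bullet> b = 0"
proof -
  have nu: "norm u > 0" using u by simp
  have tn: "t = norm u" using Q t nu power2_eq_iff_nonneg[of t "norm u"] by simp
  have ea: "vec 1 \<bullet> a \<ge> 0" using Q sum_nn by blast
  have b: "t *\<^sub>R b = - (vec 1 \<bullet> a) *\<^sub>R u" using Q by (simp add: eq_neg_iff_add_eq_0)
  hence "norm (t *\<^sub>R b) = norm (- (vec 1 \<bullet> a) *\<^sub>R u)" by simp
  hence "t * norm b = (vec 1 \<bullet> a) * norm u" using t ea by simp
  hence nb: "norm b = vec 1 \<bullet> a" using tn nu by simp
  have "t * (u \<bullet> b) = u \<bullet> (t *\<^sub>R b)" by simp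
  also have "\<dots> = - (vec 1 \<bullet> a) * (norm u)\<^sup>2" using b by (simp add: power2_norm_eq_inner)
  finally have fu: "norm u * (u \<bullet> b) = norm u * (- (vec 1 \<bullet> a) * norm u)" using tn by (simp add: power2_eq_square)
  have "u \<bullet> b = - (vec 1 \<bullet> a) * norm u" by (rule mult_left_cancel[THEN iffD1, OF _ fu]) (use nu in simp)
  moreover have "x \<bullet> a = t * (vec 1 \<bullet> a)" using Q xte[of x t a] by simp
  ultimately show ?thesis using Q tn nb by (auto simp: algebra_simps)
qed

lemma Ft1_eq: "Ft1 A B p (x - t *\<^sub>R vec 1) u t = F1 A B p x u"
  by (simp add: Ft1_def F1_def)

lemma Ft2_eq: "Ft2 A B C D p q (x - t *\<^sub>R vec 1) u t =
   (t *\<^sub>R F2 C D q x u + (vec 1 \<bullet> F1 A B p x u) *\<^sub>R u, t\<^sup>2 - (norm u)\<^sup>2)"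
  by (simp add: Ft2_def F2_def F1_def algebra_simps inner_add_right)

theorem mainTheorem3:
  fixes M :: "'w measure"
    and A :: "'w \<Rightarrow> real^'k^'k" and B :: "'w \<Rightarrow> real^'l^'k"
    and C :: "'w \<Rightarrow> real^'k^'l" and D :: "'w \<Rightarrow> real^'l^'l"
    and p :: "'w \<Rightarrow> real^'k" and q :: "'w \<Rightarrow> real^'l"
    and x :: "real^'k" and u :: "real^'l"
  assumes "prob_space M"
    and "A \<in> borel_measurable M" and "B \<in> borel_measurable M"
    and "C \<in> borel_measurable M" and "D \<in> borel_measurable M"
    and "p \<in> borel_measurable M" and "q \<in> borel_measurable M"
    and "u \<noteq> 0"
    and "\<forall>\<omega>\<in>space M. F2 (C \<omega>) (D \<omega>) (q \<omega>) x u \<noteq> 0"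
  shows "(AE \<omega> in M. extL x u
            \<and> extM (F1 (A \<omega>) (B \<omega>) (p \<omega>) x u) (F2 (C \<omega>) (D \<omega>) (q \<omega>) x u)
            \<and> x \<bullet> F1 (A \<omega>) (B \<omega>) (p \<omega>) x u + u \<bullet> F2 (C \<omega>) (D \<omega>) (q \<omega>) x u = 0)
    \<longleftrightarrow>
    (\<exists>t>0. AE \<omega> in M.
        Ft2 (A \<omega>) (B \<omega>) (C \<omega>) (D \<omega>) (p \<omega>) (q \<omega>) (x - t *\<^sub>R vec 1) u t = (0, 0)
      \<and> (\<forall>i. (x - t *\<^sub>R vec 1) $ i \<ge> 0)
      \<and> (\<forall>i. Ft1 (A \<omega>) (B \<omega>) (p \<omega>) (x - t *\<^sub>R vec 1) u t $ i \<ge> 0)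
      \<and> (x - t *\<^sub>R vec 1) \<bullet> Ft1 (A \<omega>) (B \<omega>) (p \<omega>) (x - t *\<^sub>R vec 1) u t = 0)"
proof
  assume L: "AE \<omega> in M. extL x u
            \<and> extM (F1 (A \<omega>) (B \<omega>) (p \<omega>) x u) (F2 (C \<omega>) (D \<omega>) (q \<omega>) x u)
            \<and> x \<bullet> F1 (A \<omega>) (B \<omega>) (p \<omega>) x u + u \<bullet> F2 (C \<omega>) (D \<omega>) (q \<omega>) x u = 0"
  have "norm u > 0" using assms(8) by simp
  moreover have "AE \<omega> in M.
        Ft2 (A \<omega>) (B \<omega>) (C \<omega>) (D \<omega>) (p \<omega>) (q \<omega>) (x - norm u *\<^sub>R vec 1) u (norm u) = (0, 0)
      \<and> (\<forall>i. (x - norm u *\<^sub>R vec 1) $ i \<ge> 0)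
      \<and> (\<forall>i. Ft1 (A \<omega>) (B \<omega>) (p \<omega>) (x - norm u *\<^sub>R vec 1) u (norm u) $ i \<ge> 0)
      \<and> (x - norm u *\<^sub>R vec 1) \<bullet> Ft1 (A \<omega>) (B \<omega>) (p \<omega>) (x - norm u *\<^sub>R vec 1) u (norm u) = 0"
    using L
  proof (rule eventually_mono)
    fix \<omega> assume H: "extL x u
            \<and> extM (F1 (A \<omega>) (B \<omega>) (p \<omega>) x u) (F2 (C \<omega>) (D \<omega>) (q \<omega>) x u)
            \<and> x \<bullet> F1 (A \<omega>) (B \<omega>) (p \<omega>) x u + u \<bullet> F2 (C \<omega>) (D \<omega>) (q \<omega>) x u = 0"
    have c: "norm u *\<^sub>R F2 (C \<omega>) (D \<omega>) (q \<omega>) x u + (vec 1 \<bullet> F1 (A \<omega>) (B \<omega>) (p \<omega>) x u) *\<^sub>R u = 0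
      \<and> (\<forall>i. (x - norm u *\<^sub>R vec 1)$i \<ge> 0)
      \<and> (x - norm u *\<^sub>R vec 1) \<bullet> F1 (A \<omega>) (B \<omega>) (p \<omega>) x u = 0"
      by (rule core1[OF assms(8)]) (use H in \<open>simp add: extL_def extM_def\<close>)
    show "Ft2 (A \<omega>) (B \<omega>) (C \<omega>) (D \<omega>) (p \<omega>) (q \<omega>) (x - norm u *\<^sub>R vec 1) u (norm u) = (0, 0)
      \<and> (\<forall>i. (x - norm u *\<^sub>R vec 1) $ i \<ge> 0)
      \<and> (\<forall>i. Ft1 (A \<omega>) (B \<omega>) (p \<omega>) (x - norm u *\<^sub>R vec 1) u (norm u) $ i \<ge> 0)
      \<and> (x - norm u *\<^sub>R vec 1) \<bullet> Ft1 (A \<omega>) (B \<omega>) (p \<omega>) (x - norm u *\<^sub>R vec 1) u (norm u) = 0"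
      unfolding Ft1_eq Ft2_eq using c H by (simp add: extM_def)
  qed
  ultimately show "\<exists>t>0. AE \<omega> in M.
        Ft2 (A \<omega>) (B \<omega>) (C \<omega>) (D \<omega>) (p \<omega>) (q \<omega>) (x - t *\<^sub>R vec 1) u t = (0, 0)
      \<and> (\<forall>i. (x - t *\<^sub>R vec 1) $ i \<ge> 0)
      \<and> (\<forall>i. Ft1 (A \<omega>) (B \<omega>) (p \<omega>) (x - t *\<^sub>R vec 1) u t $ i \<ge> 0)
      \<and> (x - t *\<^sub>R vec 1) \<bullet> Ft1 (A \<omega>) (B \<omega>) (p \<omega>) (x - t *\<^sub>R vec 1) u t = 0" by blast
next
  assume "\<exists>t>0. AE \<omega> in M.
        Ft2 (A \<omega>) (B \<omega>) (C \<omega>) (D \<omega>) (p \<omega>) (q \<omega>) (x - t *\<^sub>R vec 1) u t = (0, 0)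
      \<and> (\<forall>i. (x - t *\<^sub>R vec 1) $ i \<ge> 0)
      \<and> (\<forall>i. Ft1 (A \<omega>) (B \<omega>) (p \<omega>) (x - t *\<^sub>R vec 1) u t $ i \<ge> 0)
      \<and> (x - t *\<^sub>R vec 1) \<bullet> Ft1 (A \<omega>) (B \<omega>) (p \<omega>) (x - t *\<^sub>R vec 1) u t = 0"
  then obtain t where t: "t > 0" and R: "AE \<omega> in M.
        Ft2 (A \<omega>) (B \<omega>) (C \<omega>) (D \<omega>) (p \<omega>) (q \<omega>) (x - t *\<^sub>R vec 1) u t = (0, 0)
      \<and> (\<forall>i. (x - t *\<^sub>R vec 1) $ i \<ge> 0)
      \<and> (\<forall>i. Ft1 (A \<omega>) (B \<omega>) (p \<omega>) (x - t *\<^sub>R vec 1) u t $ i \<ge> 0)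
      \<and> (x - t *\<^sub>R vec 1) \<bullet> Ft1 (A \<omega>) (B \<omega>) (p \<omega>) (x - t *\<^sub>R vec 1) u t = 0" by blast
  show "AE \<omega> in M. extL x u
            \<and> extM (F1 (A \<omega>) (B \<omega>) (p \<omega>) x u) (F2 (C \<omega>) (D \<omega>) (q \<omega>) x u)
            \<and> x \<bullet> F1 (A \<omega>) (B \<omega>) (p \<omega>) x u + u \<bullet> F2 (C \<omega>) (D \<omega>) (q \<omega>) x u = 0"
    using R
  proof (rule eventually_mono)
    fix \<omega> assume H: "Ft2 (A \<omega>) (B \<omega>) (C \<omega>) (D \<omega>) (p \<omega>) (q \<omega>) (x - t *\<^sub>R vec 1) u t = (0, 0)
      \<and> (\<forall>i. (x - t *\<^sub>R vec 1) $ i \<ge> 0)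
      \<and> (\<forall>i. Ft1 (A \<omega>) (B \<omega>) (p \<omega>) (x - t *\<^sub>R vec 1) u t $ i \<ge> 0)
      \<and> (x - t *\<^sub>R vec 1) \<bullet> Ft1 (A \<omega>) (B \<omega>) (p \<omega>) (x - t *\<^sub>R vec 1) u t = 0"
    have "(\<forall>i. x$i \<ge> norm u) \<and> (vec 1 \<bullet> F1 (A \<omega>) (B \<omega>) (p \<omega>) x u \<ge> norm (F2 (C \<omega>) (D \<omega>) (q \<omega>) x u)
       \<and> (\<forall>i. F1 (A \<omega>) (B \<omega>) (p \<omega>) x u$i \<ge> 0))
       \<and> x \<bullet> F1 (A \<omega>) (B \<omega>) (p \<omega>) x u + u \<bullet> F2 (C \<omega>) (D \<omega>) (q \<omega>) x u = 0"
      by (rule core2[OF assms(8) t]) (use H[unfolded Ft1_eq Ft2_eq] in simp)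
    then show "extL x u
            \<and> extM (F1 (A \<omega>) (B \<omega>) (p \<omega>) x u) (F2 (C \<omega>) (D \<omega>) (q \<omega>) x u)
            \<and> x \<bullet> F1 (A \<omega>) (B \<omega>) (p \<omega>) x u + u \<bullet> F2 (C \<omega>) (D \<omega>) (q \<omega>) x u = 0"
      by (simp add: extL_def extM_def)
  qed
qed

end
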